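(* Let $\mathcal{T}$ be a finite or countably infinite set, let $\prec$ be a strict total order on $\mathcal{T}$, and let $\mathbf{p}$ and $\mathbf{q}$ be two probability distributions on $\mathcal{T}$. For each positive integer $m$, consider mutually independent random variables $X_0 \sim \mathbf{q}$, $X_1,\dots,X_m \sim^{\mathrm{iid}} \mathbf{p}$, $U_0,U_1,\dots,U_m \sim^{\mathrm{iid}} \mathrm{Uniform}(0,1)$, and define $$R = \sum_{j=1}^m \Big( \mathbb{I}[X_j \prec X_0] + \mathbb{I}[X_j = X_0,\ U_j < U_0] \Big).$$ Then $\mathbf{p} = \mathbf{q}$ if and only if for all $m \ge 1$, the random variable $R$ is distributed as a discrete uniform random variable on $\{0,1,\dots,m\}$.
   Context: $\mathbb{I}[\cdot]$ denotes the indicator of an event. The random variable $R$ depends on $m$ (and on $\prec$, $\mathbf{p}$, $\mathbf{q}$); it is the rank of $X_0$ among $X_1,\dots,X_m$ with ties broken by the uniform variables. *)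

theory Defs
  imports "HOL-Probability.Probability"
begin

text \<open>Sample space for fixed m: coordinate j \<in> {0..m} carries the pair (X_j, U_j).
  X_0 ~ q, X_j ~ p (j \<ge> 1), U_j ~ Uniform(0,1), all mutually independent
  (product measure).\<close>
definition rank_space :: "'a pmf \<Rightarrow> 'a pmf \<Rightarrow> nat \<Rightarrow> (nat \<Rightarrow> 'a \<times> real) measure" where
  "rank_space p q m =
     (\<Pi>\<^sub>M j\<in>{0..m}. (measure_pmf (if j = 0 then q else p)
                          \<Otimes>\<^sub>M uniform_measure lborel {0<..<(1::real)}))"

text \<open>R = sum_{j=1}^m ( I[X_j \<prec> X_0] + I[X_j = X_0 \<and> U_j < U_0] ), where
  (x, y) \<in> r means x \<prec> y.\<close>
definition rank_stat :: "('a \<times> 'a) set \<Rightarrow> nat \<Rightarrow> (nat \<Rightarrow> 'a \<times> real) \<Rightarrow> nat" where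
  "rank_stat r m \<omega> =
     (\<Sum>j\<in>{1..m}. (if (fst (\<omega> j), fst (\<omega> 0)) \<in> r then 1 else 0)
                 + (if fst (\<omega> j) = fst (\<omega> 0) \<and> snd (\<omega> j) < snd (\<omega> 0) then 1 else 0))"

end

theory Submission
  imports Defs "HOL-Analysis.Weierstrass_Theorems" "HOL-Analysis.Gamma_Function"
begin


definition below :: "('a \<times> 'a) set \<Rightarrow> 'a \<times> real \<Rightarrow> 'a \<times> real \<Rightarrow> bool" where
  "below r z0 z \<longleftrightarrow> (fst z, fst z0) \<in> r \<or> (fst z = fst z0 \<and> snd z < snd z0)"

abbreviation UU :: "real measure" where "UU \<equiv> uniform_measure lborel {0<..<(1::real)}"

definition nu :: "'a pmf \<Rightarrow> ('a \<times> real) measure" where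
  "nu p = measure_pmf p \<Otimes>\<^sub>M UU"

lemma prob_UU: "prob_space UU"
  by (rule prob_space_uniform_measure) auto

lemma prob_nu: "prob_space (nu p)"
  unfolding nu_def using prob_UU
  by (intro prob_space_pair) (auto simp: measure_pmf.prob_space_axioms)

lemma sets_nu: "sets (nu p) = sets (count_space UNIV \<Otimes>\<^sub>M (borel :: real measure))"
  unfolding nu_def by (intro sets_pair_measure_cong) auto

lemma space_nu[simp]: "space (nu p) = UNIV"
  unfolding nu_def by (simp add: space_pair_measure)

lemma pred_below:
  fixes r :: "('a::countable \<times> 'a) set"
  assumes f: "f \<in> measurable M (count_space UNIV \<Otimes>\<^sub>M (borel :: real measure))"
    and g: "g \<in> measurable M (count_space UNIV \<Otimes>\<^sub>M (borel :: real measure))"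
  shows "Measurable.pred M (\<lambda>x. below r (f x) (g x))"
proof -
  have f1: "(\<lambda>x. fst (f x)) \<in> measurable M (count_space UNIV)" using f by measurable
  have g1: "(\<lambda>x. fst (g x)) \<in> measurable M (count_space UNIV)" using g by measurable
  have f2: "(\<lambda>x. snd (f x)) \<in> borel_measurable M" using f by measurable
  have g2: "(\<lambda>x. snd (g x)) \<in> borel_measurable M" using g by measurable
  have i1: "Measurable.pred M (\<lambda>x. (fst (g x), a) \<in> r)" for a
    by (rule measurable_compose_countable[where f="\<lambda>b x. (b, a) \<in> r" and g="\<lambda>x. fst (g x)", OF _ g1]) simp
  have A: "Measurable.pred M (\<lambda>x. (fst (g x), fst (f x)) \<in> r)"
    by (rule measurable_compose_countable[where f="\<lambda>a x. (fst (g x), a) \<in> r" and g="\<lambda>x. fst (f x)", OF i1 f1])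
  have i2: "Measurable.pred M (\<lambda>x. fst (g x) = a)" for a
    by (rule measurable_compose_countable[where f="\<lambda>b x. b = a" and g="\<lambda>x. fst (g x)", OF _ g1]) simp
  have B: "Measurable.pred M (\<lambda>x. fst (g x) = fst (f x))"
    by (rule measurable_compose_countable[where f="\<lambda>a x. fst (g x) = a" and g="\<lambda>x. fst (f x)", OF i2 f1])
  have C: "Measurable.pred M (\<lambda>x. snd (g x) < snd (f x))"
    using f2 g2 by measurable
  show ?thesis unfolding below_def using A B C by measurable
qed

definition MM :: "'a pmf \<Rightarrow> 'a pmf \<Rightarrow> nat \<Rightarrow> nat \<Rightarrow> ('a \<times> real) measure" where
  "MM p q m = (\<lambda>j. if j = 0 then nu q else nu p)"

lemma rank_space_eq: "rank_space p q m = PiM {0..m} (MM p q m)"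
  unfolding rank_space_def MM_def nu_def by (intro PiM_cong) auto

lemma rank_stat_eq:
  assumes "irrefl r"
  shows "rank_stat r m \<omega> = card {j\<in>{1..m}. below r (\<omega> 0) (\<omega> j)}"
proof -
  have "rank_stat r m \<omega> = (\<Sum>j\<in>{1..m}. if below r (\<omega> 0) (\<omega> j) then 1 else 0)"
    unfolding rank_stat_def below_def
    by (intro sum.cong refl) (use assms in \<open>auto simp: irrefl_def\<close>)
  also have "\<dots> = card {j\<in>{1..m}. below r (\<omega> 0) (\<omega> j)}"
    by (simp add: sum.If_cases Int_def conj_assoc)
  finally show ?thesis .
qed

lemma meas_nat_sum:
  fixes f :: "nat \<Rightarrow> 'b \<Rightarrow> nat"
  assumes "\<And>j. j \<in> J \<Longrightarrow> f j \<in> measurable M (count_space UNIV)"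
  shows "(\<lambda>x. \<Sum>j\<in>J. f j x) \<in> measurable M (count_space UNIV)"
proof -
  have "(\<lambda>x. \<Sum>j\<in>J. f j x) \<in> measurable M borel"
    using assms by (intro borel_measurable_sum) (simp add: measurable_cong_sets[OF refl sets_borel_eq_count_space])
  then show ?thesis by (simp add: measurable_cong_sets[OF refl sets_borel_eq_count_space])
qed

lemma rank_stat_meas:
  fixes r :: "('a::countable \<times> 'a) set"
  assumes "irrefl r"
  shows "rank_stat r m \<in> measurable (PiM {0..m} (MM p q m)) (count_space UNIV)"
proof -
  have sets: "sets (PiM {0..m} (MM p q m)) = sets (PiM {0..m} (\<lambda>_. count_space UNIV \<Otimes>\<^sub>M (borel :: real measure)))"
    by (intro sets_PiM_cong) (auto simp: MM_def sets_nu)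
  have c: "(\<lambda>\<omega>. \<omega> j) \<in> measurable (PiM {0..m} (MM p q m)) (count_space UNIV \<Otimes>\<^sub>M (borel :: real measure))"
    if "j \<in> {0..m}" for j
    unfolding measurable_cong_sets[OF sets refl] using that by measurable
  have "(\<lambda>\<omega>. \<Sum>j\<in>{1..m}. if below r (\<omega> 0) (\<omega> j) then 1 else 0::nat) \<in> measurable (PiM {0..m} (MM p q m)) (count_space UNIV)"
  proof (intro meas_nat_sum)
    fix j assume j: "j \<in> {1..m}"
    have "Measurable.pred (PiM {0..m} (MM p q m)) (\<lambda>\<omega>. below r (\<omega> 0) (\<omega> j))"
      by (rule pred_below) (use c j in auto)
    then show "(\<lambda>\<omega>. if below r (\<omega> 0) (\<omega> j) then 1 else 0::nat) \<in> measurable (PiM {0..m} (MM p q m)) (count_space UNIV)"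
      by measurable
  qed
  moreover have "rank_stat r m = (\<lambda>\<omega>. \<Sum>j\<in>{1..m}. if below r (\<omega> 0) (\<omega> j) then 1 else 0::nat)"
    by (rule ext) (simp add: rank_stat_eq[OF assms] sum.If_cases Int_def conj_assoc)
  ultimately show ?thesis by simp
qed

lemma prob_MM: "prob_space (MM p q m j)"
  unfolding MM_def using prob_nu by auto

lemma MM_pos: "j \<noteq> 0 \<Longrightarrow> MM p q m j = nu p"
  unfolding MM_def by auto

lemma split_eq:
  "PiM {0..m} (MM p q m) = distr (nu q \<Otimes>\<^sub>M PiM {1..m} (MM p q m)) (PiM {0..m} (MM p q m)) (\<lambda>(x, X). X(0 := x))"
proof -
  have "insert 0 {1..m} = {0..m}" by auto
  then show ?thesis
    using distr_pair_PiM_eq_PiM[of "{1..m}" "MM p q m" 0, OF prob_MM prob_MM]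
    by (simp add: MM_def)
qed

lemma upd_meas:
  "(\<lambda>(x, X). X(0 := x)) \<in> measurable (nu q \<Otimes>\<^sub>M PiM {1..m} (MM p q m)) (PiM {0..m} (MM p q m))"
proof -
  have "(\<lambda>y. (snd y) (0 := fst y)) \<in> measurable (nu q \<Otimes>\<^sub>M PiM {1..m} (MM p q m)) (PiM {0..m} (MM p q m))"
    by (rule measurable_fun_upd[where J="{1..m}"]) (auto simp: MM_def)
  then show ?thesis by (simp add: case_prod_beta')
qed

lemma rank_prob:
  fixes r :: "('a::countable \<times> 'a) set"
  assumes "irrefl r"
  shows "emeasure (distr (rank_space p q m) (count_space UNIV) (rank_stat r m)) K =
    (\<integral>\<^sup>+z. emeasure (PiM {1..m} (MM p q m)) {X \<in> space (PiM {1..m} (MM p q m)). card {j\<in>{1..m}. below r z (X j)} \<in> K} \<partial>nu q)"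
proof -
  let ?P = "PiM {0..m} (MM p q m)"
  let ?Q = "PiM {1..m} (MM p q m)"
  let ?g = "(\<lambda>(x, X). X(0 := x)) :: ('a \<times> real) \<times> (nat \<Rightarrow> 'a \<times> real) \<Rightarrow> _"
  have meas: "rank_stat r m \<in> measurable ?P (count_space UNIV)"
    by (rule rank_stat_meas[OF assms])
  interpret Q: prob_space ?Q by (intro prob_space_PiM prob_MM)
  have "emeasure (distr (rank_space p q m) (count_space UNIV) (rank_stat r m)) K =
      emeasure ?P (rank_stat r m -` K \<inter> space ?P)"
    unfolding rank_space_eq using meas by (subst emeasure_distr) auto
  also have "\<dots> = emeasure (distr (nu q \<Otimes>\<^sub>M ?Q) ?P ?g) (rank_stat r m -` K \<inter> space ?P)"
    by (subst split_eq[symmetric]) simp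
  also have "\<dots> = emeasure (nu q \<Otimes>\<^sub>M ?Q) (?g -` (rank_stat r m -` K \<inter> space ?P) \<inter> space (nu q \<Otimes>\<^sub>M ?Q))"
    using meas upd_meas by (intro emeasure_distr) (auto intro: measurable_sets)
  also have "\<dots> = (\<integral>\<^sup>+z. emeasure ?Q (Pair z -` (?g -` (rank_stat r m -` K \<inter> space ?P) \<inter> space (nu q \<Otimes>\<^sub>M ?Q))) \<partial>nu q)"
    using meas upd_meas by (intro Q.emeasure_pair_measure_alt measurable_sets[OF upd_meas] measurable_sets[OF meas]) auto
  also have "\<dots> = (\<integral>\<^sup>+z. emeasure ?Q {X \<in> space ?Q. card {j\<in>{1..m}. below r z (X j)} \<in> K} \<partial>nu q)"
  proof (intro nn_integral_cong arg_cong2[where f=emeasure] refl)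
    fix z
    show "Pair z -` (?g -` (rank_stat r m -` K \<inter> space ?P) \<inter> space (nu q \<Otimes>\<^sub>M ?Q)) =
      {X \<in> space ?Q. card {j\<in>{1..m}. below r z (X j)} \<in> K}"
    proof -
      have 1: "X \<in> space ?Q \<Longrightarrow> X(0 := z) \<in> space ?P" for X
        by (auto simp: space_PiM PiE_iff MM_def extensional_def)
      have 2: "{j\<in>{1..m}. below r ((X(0:=z)) 0) ((X(0:=z)) j)} = {j\<in>{1..m}. below r z (X j)}" for X
        by auto
      show ?thesis using 1 2
        by (auto simp: space_pair_measure rank_stat_eq[OF assms])
    qed
  qed
  finally show ?thesis .
qed

lemma binom_count:
  assumes N: "prob_space N" and A: "A \<in> sets N" and J: "finite J"
  shows "emeasure (PiM J (\<lambda>_. N)) {X \<in> space (PiM J (\<lambda>_. N)). card {j\<in>J. X j \<in> A} = k} =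
    ennreal (Bernstein (card J) k (measure N A))"
proof -
  interpret N: prob_space N by fact
  interpret P: product_sigma_finite "\<lambda>_. N"
    unfolding product_sigma_finite_def by (auto intro: N.sigma_finite_measure)
  let ?SS = "{S. S \<subseteq> J \<and> card S = k}"
  let ?B = "\<lambda>S. PiE J (\<lambda>j. if j \<in> S then A else space N - A)"
  let ?a = "measure N A"
  have eq: "{X \<in> space (PiM J (\<lambda>_. N)). card {j\<in>J. X j \<in> A} = k} = (\<Union>S\<in>?SS. ?B S)"
  proof (intro equalityI subsetI)
    fix X assume X: "X \<in> {X \<in> space (PiM J (\<lambda>_. N)). card {j\<in>J. X j \<in> A} = k}"
    then have "X \<in> ?B {j\<in>J. X j \<in> A}"
      by (auto simp: space_PiM PiE_iff)
    moreover have "{j\<in>J. X j \<in> A} \<in> ?SS" using X by auto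
    ultimately show "X \<in> (\<Union>S\<in>?SS. ?B S)" by blast
  next
    fix X assume "X \<in> (\<Union>S\<in>?SS. ?B S)"
    then obtain S where S: "S \<subseteq> J" "card S = k" and XB: "X \<in> ?B S" by auto
    have "{j\<in>J. X j \<in> A} = S"
      using XB S by (auto simp: PiE_iff split: if_splits)
    moreover have "X \<in> space (PiM J (\<lambda>_. N))"
      using XB sets.sets_into_space[OF A] by (auto simp: space_PiM PiE_iff split: if_splits)
    ultimately show "X \<in> {X \<in> space (PiM J (\<lambda>_. N)). card {j\<in>J. X j \<in> A} = k}"
      using S by auto
  qed
  have disj: "disjoint_family_on ?B ?SS"
    unfolding disjoint_family_on_def
  proof (intro ballI impI)
    fix S T assume S: "S \<in> ?SS" and T: "T \<in> ?SS" and ST: "S \<noteq> T"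
    show "?B S \<inter> ?B T = {}"
    proof (rule ccontr)
      assume "?B S \<inter> ?B T \<noteq> {}"
      then obtain X where X: "X \<in> ?B S" "X \<in> ?B T" by blast
      have "S = {j\<in>J. X j \<in> A}" using X(1) S by (auto simp: PiE_iff split: if_splits)
      moreover have "T = {j\<in>J. X j \<in> A}" using X(2) T by (auto simp: PiE_iff split: if_splits)
      ultimately show False using ST by simp
    qed
  qed
  have Bsets: "?B ` ?SS \<subseteq> sets (PiM J (\<lambda>_. N))"
    using A J by (auto intro!: sets_PiM_I_finite)
  have finSS: "finite ?SS" using J by (auto intro: finite_subset[of _ "Pow J"])
  have Bmeas: "emeasure (PiM J (\<lambda>_. N)) (?B S) = ennreal (?a ^ k * (1 - ?a) ^ (card J - k))"
    if S: "S \<in> ?SS" for S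
  proof -
    have "emeasure (PiM J (\<lambda>_. N)) (?B S) = (\<Prod>j\<in>J. emeasure N (if j \<in> S then A else space N - A))"
      using A J by (intro P.emeasure_PiM) auto
    also have "\<dots> = (\<Prod>j\<in>J. ennreal (if j \<in> S then ?a else 1 - ?a))"
      using A by (intro prod.cong refl) (auto simp: N.emeasure_eq_measure N.prob_compl)
    also have "\<dots> = ennreal (\<Prod>j\<in>J. (if j \<in> S then ?a else 1 - ?a))"
      by (intro prod_ennreal) (auto simp: N.prob_le_1)
    also have "(\<Prod>j\<in>J. (if j \<in> S then ?a else 1 - ?a)) = ?a ^ card (J \<inter> {j. j \<in> S}) * (1 - ?a) ^ card (J \<inter> - {j. j \<in> S})"
      by (simp add: prod.If_cases J)
    also have "J \<inter> {j. j \<in> S} = S" using S by auto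
    also have "J \<inter> - {j. j \<in> S} = J - S" by auto
    also have "card (J - S) = card J - k" using S J by (auto simp: card_Diff_subset finite_subset)
    finally show ?thesis using S by simp
  qed
  have "emeasure (PiM J (\<lambda>_. N)) {X \<in> space (PiM J (\<lambda>_. N)). card {j\<in>J. X j \<in> A} = k} =
      (\<Sum>S\<in>?SS. emeasure (PiM J (\<lambda>_. N)) (?B S))"
    unfolding eq using sum_emeasure[OF Bsets disj finSS] by simp
  also have "\<dots> = (\<Sum>S\<in>?SS. ennreal (?a ^ k * (1 - ?a) ^ (card J - k)))"
    using Bmeas by (intro sum.cong) auto
  also have "\<dots> = ennreal (real (card ?SS) * (?a ^ k * (1 - ?a) ^ (card J - k)))"
    by (simp add: ennreal_of_nat_eq_real_of_nat ennreal_mult' N.prob_le_1)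
  also have "card ?SS = card J choose k" using n_subsets[OF J] by simp
  finally show ?thesis by (simp add: Bernstein_def mult.assoc)
qed

lemma card_filter_sum:
  assumes "finite J"
  shows "card {j\<in>J. P j} = (\<Sum>j\<in>J. if P j then 1 else 0)"
proof -
  have "card {j\<in>J. P j} = (\<Sum>j\<in>{j\<in>J. P j}. 1)" by simp
  also have "\<dots> = (\<Sum>j\<in>J. if P j then 1 else 0)"
    using assms by (rule sum.inter_filter)
  finally show ?thesis .
qed

definition Fz :: "'a pmf \<Rightarrow> ('a \<times> 'a) set \<Rightarrow> 'a \<times> real \<Rightarrow> real" where
  "Fz p r z = measure (nu p) {y. below r z y}"

lemma below_sets:
  fixes r :: "('a::countable \<times> 'a) set"
  shows "{y. below r z y} \<in> sets (nu p)"
proof -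
  have "Measurable.pred (nu p) (\<lambda>y. below r ((\<lambda>_. z) y) (id y))"
  proof (rule pred_below)
    show "(\<lambda>_. z) \<in> measurable (nu p) (count_space UNIV \<Otimes>\<^sub>M (borel :: real measure))"
      by (rule measurable_const) (simp add: space_pair_measure)
    show "id \<in> measurable (nu p) (count_space UNIV \<Otimes>\<^sub>M (borel :: real measure))"
      by (simp add: measurable_cong_sets[OF sets_nu refl] measurable_ident_sets)
  qed
  then show ?thesis using pred_def by (simp add: pred_def)
qed

lemma Fz_bounds: "0 \<le> Fz p r z" "Fz p r z \<le> 1"
  unfolding Fz_def using prob_space.prob_le_1[OF prob_nu] by auto

lemma PiM_MM: "PiM {1..m} (MM p q m) = PiM {1..m} (\<lambda>_. nu p)"
  by (intro PiM_cong) (auto simp: MM_pos)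

lemma rank_prob2:
  fixes r :: "('a::countable \<times> 'a) set"
  assumes "irrefl r"
  shows "emeasure (distr (rank_space p q m) (count_space UNIV) (rank_stat r m)) K =
    (\<integral>\<^sup>+z. (\<Sum>k\<in>K \<inter> {..m}. ennreal (Bernstein m k (Fz p r z))) \<partial>nu q)"
  unfolding rank_prob[OF assms] PiM_MM
proof (intro nn_integral_cong)
  fix z
  let ?Q = "PiM {1..m} (\<lambda>_. nu p)"
  let ?C = "\<lambda>k. {X \<in> space ?Q. card {j\<in>{1..m}. below r z (X j)} = k}"
  have "{X \<in> space ?Q. card {j\<in>{1..m}. below r z (X j)} \<in> K} = (\<Union>k\<in>K \<inter> {..m}. ?C k)"
  proof -
    have "card {j\<in>{1..m}. below r z (X j)} \<le> card {1..m}" for X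
      by (rule card_mono) auto
    then have "card {j\<in>{1..m}. below r z (X j)} \<le> m" for X by simp
    then show ?thesis by auto
  qed
  moreover have "(\<Sum>k\<in>K \<inter> {..m}. emeasure ?Q (?C k)) = emeasure ?Q (\<Union>k\<in>K \<inter> {..m}. ?C k)"
  proof (rule sum_emeasure)
    show "?C ` (K \<inter> {..m}) \<subseteq> sets ?Q"
    proof
      fix S assume "S \<in> ?C ` (K \<inter> {..m})"
      then obtain k where S: "S = ?C k" by auto
      have "?C k = {X \<in> space ?Q. card {j\<in>{1..m}. X j \<in> {y. below r z y}} = k}" by simp
      also have "\<dots> \<in> sets ?Q"
      proof -
        have "(\<lambda>X. card {j\<in>{1..m}. X j \<in> {y. below r z y}}) \<in> measurable ?Q (count_space UNIV)"
        proof -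
          have "(\<lambda>X. \<Sum>j\<in>{1..m}. if X j \<in> {y. below r z y} then 1 else 0::nat) \<in> measurable ?Q (count_space UNIV)"
          proof (intro meas_nat_sum)
            fix j assume j: "j \<in> {1..m}"
            have "Measurable.pred ?Q (\<lambda>X. X j \<in> {y. below r z y})"
              using j below_sets[of r z p] by measurable
            then show "(\<lambda>X. if X j \<in> {y. below r z y} then 1 else 0::nat) \<in> measurable ?Q (count_space UNIV)"
              by measurable
          qed
          moreover have "(\<lambda>X. card {j\<in>{1..m}. X j \<in> {y. below r z y}}) = (\<lambda>X. \<Sum>j\<in>{1..m}. if X j \<in> {y. below r z y} then 1 else 0::nat)"
            by (intro ext card_filter_sum) simp
          ultimately show ?thesis by simp
        qed
        then have "(\<lambda>X. card {j\<in>{1..m}. X j \<in> {y. below r z y}}) -` {k} \<inter> space ?Q \<in> sets ?Q"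
          by (rule measurable_sets) simp
        moreover have "(\<lambda>X. card {j\<in>{1..m}. X j \<in> {y. below r z y}}) -` {k} \<inter> space ?Q =
            {X \<in> space ?Q. card {j\<in>{1..m}. X j \<in> {y. below r z y}} = k}" by blast
        ultimately show ?thesis by (simp only:)
      qed
      finally show "S \<in> sets ?Q" using S by (simp only:)
    qed
    show "disjoint_family_on ?C (K \<inter> {..m})"
      unfolding disjoint_family_on_def by auto
  qed simp
  moreover have "emeasure ?Q (?C k) = ennreal (Bernstein m k (Fz p r z))" for k
    using binom_count[OF prob_nu below_sets[of r z p], of "{1..m}" k] by (simp add: Fz_def)
  ultimately show "emeasure ?Q {X \<in> space ?Q. card {j\<in>{1..m}. below r z (X j)} \<in> K} =
      (\<Sum>k\<in>K \<inter> {..m}. ennreal (Bernstein m k (Fz p r z)))" by simp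
qed

lemma measure_UU_lt: "measure UU {..<u} = max 0 (min 1 u)"
proof -
  have "measure UU {..<u} = measure lborel ({0<..<1} \<inter> {..<u}) / measure lborel {0<..<(1::real)}"
    by (subst measure_uniform_measure) auto
  also have "\<dots> = measure lborel ({0<..<1} \<inter> {..<u})" by simp
  also have "\<dots> = max 0 (min 1 u)"
  proof (cases "u \<le> 0")
    case True
    then have "{0<..<1} \<inter> {..<u} = ({} :: real set)" by auto
    then show ?thesis using True by simp
  next
    case False
    then have "{0<..<1} \<inter> {..<u} = {0<..<min 1 u}" by auto
    then show ?thesis using False by simp
  qed
  finally show ?thesis .
qed

lemma measure_nu_times:
  assumes B: "B \<in> sets borel"
  shows "measure (nu p) (A \<times> B) = measure (measure_pmf p) A * measure UU B"
proof -
  interpret U: prob_space UU by (rule prob_UU)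
  have "emeasure (nu p) (A \<times> B) = emeasure (measure_pmf p) A * emeasure UU B"
    unfolding nu_def using B by (intro U.emeasure_pair_measure_Times) auto
  then show ?thesis
    by (simp add: measure_def enn2real_mult)
qed

definition aa :: "'a pmf \<Rightarrow> ('a \<times> 'a) set \<Rightarrow> 'a \<Rightarrow> real" where
  "aa p r x = measure (measure_pmf p) {y. (y, x) \<in> r}"

lemma Fz_eq:
  fixes r :: "('a::countable \<times> 'a) set"
  assumes "irrefl r"
  shows "Fz p r (x, u) = aa p r x + pmf p x * max 0 (min 1 u)"
proof -
  interpret N: prob_space "nu p" by (rule prob_nu)
  have eq: "{y. below r (x, u) y} = {y. (y, x) \<in> r} \<times> UNIV \<union> {x} \<times> {..<u}"
    by (auto simp: below_def)
  have d: "{y. (y, x) \<in> r} \<times> UNIV \<inter> {x} \<times> {..<u} = {}"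
    using assms by (auto simp: irrefl_def)
  have s1: "{y. (y, x) \<in> r} \<times> (UNIV :: real set) \<in> sets (nu p)"
    unfolding sets_nu by (intro pair_measureI) auto
  have s2: "{x} \<times> {..<u} \<in> sets (nu p)"
    unfolding sets_nu by (intro pair_measureI) auto
  have "Fz p r (x, u) = measure (nu p) ({y. (y, x) \<in> r} \<times> UNIV) + measure (nu p) ({x} \<times> {..<u})"
    unfolding Fz_def eq using d s1 s2 by (intro N.finite_measure_Union) auto
  also have "\<dots> = aa p r x + pmf p x * max 0 (min 1 u)"
    by (simp add: measure_nu_times aa_def measure_UU_lt measure_pmf_single)
  finally show ?thesis .
qed

lemma Bern_integral:
  assumes km: "k \<le> m"
  shows "((\<lambda>t. Bernstein m k t) has_integral 1 / (real m + 1)) {0<..<1}"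
proof -
  have "((\<lambda>t. t powr (real (k+1) - 1) * (1 - t) powr (real (m-k+1) - 1)) has_integral Beta (real (k+1)) (real (m-k+1))) {0..1}"
    by (rule has_integral_Beta_real) auto
  then have "((\<lambda>t. t powr (real (k+1) - 1) * (1 - t) powr (real (m-k+1) - 1)) has_integral Beta (real (k+1)) (real (m-k+1))) {0<..<1}"
    by (simp add: has_integral_Icc_iff_Ioo)
  then have "((\<lambda>t. t ^ k * (1 - t) ^ (m - k)) has_integral Beta (real (k+1)) (real (m-k+1))) {0<..<1}"
    by (rule has_integral_eq[rotated]) (auto simp: powr_realpow)
  then have "((\<lambda>t. real (m choose k) * (t ^ k * (1 - t) ^ (m - k))) has_integral real (m choose k) * Beta (real (k+1)) (real (m-k+1))) {0<..<1}"
    by (rule has_integral_mult_right)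
  moreover have "real (m choose k) * Beta (real (k+1)) (real (m-k+1)) = 1 / (real m + 1)"
  proof -
    have g1: "Gamma (real (k+1)) = fact k" using Gamma_fact[of k] by (simp add: add.commute)
    have g2: "Gamma (real (m-k+1)) = fact (m-k)" using Gamma_fact[of "m-k"] by (simp add: add.commute)
    have g3: "Gamma (real (k+1) + real (m-k+1)) = fact (m+1)"
      using Gamma_fact[of "m+1"] km by (simp add: add.commute)
    have f: "fact k * fact (m - k) * real (m choose k) = fact m"
      using binomial_fact_lemma[OF km] by (metis of_nat_fact of_nat_mult)
    have "real (m choose k) * Beta (real (k+1)) (real (m-k+1)) = fact k * fact (m - k) * real (m choose k) / fact (m+1)"
      unfolding Beta_def g1 g2 g3 by simp
    also have "\<dots> = fact m / fact (m+1)" by (simp only: f)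
    also have "\<dots> = 1 / (real m + 1)"
    proof -
      have fm: "(fact m :: real) > 0" by simp
      have "(fact (m+1) :: real) = (real m + 1) * fact m" by simp
      then show ?thesis using fm by simp
    qed
    finally show ?thesis .
  qed
  ultimately show ?thesis by (simp add: Bernstein_def mult.assoc)
qed

lemma Bern_var:
  assumes "0 \<le> w" "w \<le> 1"
  shows "(\<Sum>k\<le>m. (real k - real m * w)\<^sup>2 * Bernstein m k w) = real m * w * (1 - w)"
proof -
  have "(\<Sum>k\<le>m. (real k - real m * w)\<^sup>2 * Bernstein m k w) =
    (\<Sum>k\<le>m. real k * (real k - 1) * Bernstein m k w) + (1 - 2 * real m * w) * (\<Sum>k\<le>m. real k * Bernstein m k w)
      + (real m * w)\<^sup>2 * (\<Sum>k\<le>m. Bernstein m k w)"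
  proof -
    have "(\<Sum>k\<le>m. (real k - real m * w)\<^sup>2 * Bernstein m k w) =
      (\<Sum>k\<le>m. real k * (real k - 1) * Bernstein m k w + (1 - 2 * real m * w) * (real k * Bernstein m k w)
        + (real m * w)\<^sup>2 * Bernstein m k w)"
      by (intro sum.cong) (simp_all add: power2_eq_square algebra_simps)
    also have "\<dots> = (\<Sum>k\<le>m. real k * (real k - 1) * Bernstein m k w) + (1 - 2 * real m * w) * (\<Sum>k\<le>m. real k * Bernstein m k w)
      + (real m * w)\<^sup>2 * (\<Sum>k\<le>m. Bernstein m k w)"
      by (simp only: sum.distrib sum_distrib_left)
    finally show ?thesis .
  qed
  also have "\<dots> = real m * w * (1 - w)"
    by (simp only: sum_kk_Bernstein sum_k_Bernstein sum_Bernstein) (simp add: power2_eq_square algebra_simps)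
  finally show ?thesis .
qed

lemma Bern_tail:
  fixes m :: nat and d w :: real
  assumes m: "m > 0" and d: "d > 0" and w: "0 \<le> w" "w \<le> 1" and K: "K \<subseteq> {..m}"
    and far: "\<And>k. k \<in> K \<Longrightarrow> \<bar>real k - real m * w\<bar> \<ge> real m * d"
  shows "(\<Sum>k\<in>K. Bernstein m k w) \<le> 1 / (4 * real m * d\<^sup>2)"
proof -
  have md: "real m * d > 0" using m d by simp
  have "(\<Sum>k\<in>K. Bernstein m k w) \<le> (\<Sum>k\<in>K. (real k - real m * w)\<^sup>2 / (real m * d)\<^sup>2 * Bernstein m k w)"
  proof (rule sum_mono)
    fix k assume k: "k \<in> K"
    have "(real m * d)\<^sup>2 \<le> (real k - real m * w)\<^sup>2"
      using far[OF k] md by (metis abs_le_square_iff abs_of_pos)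
    moreover have "(real m * d)\<^sup>2 > 0" using md by (intro zero_less_power) 
    ultimately have "1 \<le> (real k - real m * w)\<^sup>2 / (real m * d)\<^sup>2"
      by (simp add: le_divide_eq)
    then show "Bernstein m k w \<le> (real k - real m * w)\<^sup>2 / (real m * d)\<^sup>2 * Bernstein m k w"
      using Bernstein_nonneg[OF w] by (metis mult_le_cancel_right1 not_le)
  qed
  also have "\<dots> \<le> (\<Sum>k\<le>m. (real k - real m * w)\<^sup>2 / (real m * d)\<^sup>2 * Bernstein m k w)"
  proof -
    have nn: "0 \<le> (real b - real m * w)\<^sup>2 / (real m * d)\<^sup>2 * Bernstein m b w" for b
      by (intro mult_nonneg_nonneg divide_nonneg_nonneg Bernstein_nonneg w) simp_all
    show ?thesis using K nn by (intro sum_mono2) auto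
  qed
  also have "\<dots> = (\<Sum>k\<le>m. (real k - real m * w)\<^sup>2 * Bernstein m k w) / (real m * d)\<^sup>2"
    by (simp add: sum_divide_distrib)
  also have "\<dots> = real m * w * (1 - w) / (real m * d)\<^sup>2"
    using Bern_var[OF w] by simp
  also have "\<dots> \<le> real m * (1/4) / (real m * d)\<^sup>2"
  proof -
    have h: "0 \<le> (w - 1/2) * (w - 1/2)" by simp
    have e1: "(w - 1/2) * (w - 1/2) = w * w - w + 1/4" by (simp add: algebra_simps)
    have e2: "w * (1 - w) = w - w * w" by (simp add: algebra_simps)
    have "w * (1 - w) \<le> 1/4" using h e1 e2 by argo
    then show ?thesis using m by (intro divide_right_mono) (auto simp: mult.assoc)
  qed
  also have "\<dots> = 1 / (4 * real m * d\<^sup>2)"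
    using m d by (simp add: power2_eq_square field_simps)
  finally show ?thesis .
qed

lemma count_lb:
  fixes al be :: real and m :: nat
  assumes al: "0 \<le> al" and be: "be \<le> 1"
  shows "real (card {k. k \<le> m \<and> real m * al < real k \<and> real k < real m * be}) \<ge> real m * (be - al) - 1"
proof -
  let ?S = "{k. k \<le> m \<and> real m * al < real k \<and> real k < real m * be}"
  define lo where "lo = nat \<lfloor>real m * al\<rfloor> + 1"
  define hi where "hi = nat \<lceil>real m * be\<rceil>"
  have mal: "real m * al \<ge> 0" using al by simp
  have sub: "{lo..<hi} \<subseteq> ?S"
  proof
    fix k assume k: "k \<in> {lo..<hi}"
    have "real k \<ge> real lo" using k by simp
    moreover have "real lo > real m * al"
      using mal unfolding lo_def by (simp add: of_nat_nat) linarith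
    ultimately have 1: "real m * al < real k" by simp
    have "k < hi" using k by simp
    then have "int k < \<lceil>real m * be\<rceil>" unfolding hi_def by linarith
    then have 2: "real k < real m * be" by (simp add: less_ceiling_iff) 
    have "real m * be \<le> real m" using be by (simp add: mult_left_le)
    then have 3: "k \<le> m" using 2 by linarith
    show "k \<in> ?S" using 1 2 3 by simp
  qed
  have fin: "finite ?S" by simp
  have "real (card {lo..<hi}) \<le> real (card ?S)"
    using card_mono[OF fin sub] by simp
  moreover have "real (card {lo..<hi}) \<ge> real hi - real lo" by simp
  moreover have "real hi \<ge> real m * be" unfolding hi_def
    by (metis le_of_int_ceiling of_int_of_nat_eq le_nat_iff nat_le_iff of_nat_nat order.trans
        ceiling_le_iff le_cases linorder_not_le)
  moreover have "real lo \<le> real m * al + 1"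
    using mal unfolding lo_def by (simp add: of_nat_nat)
  ultimately show ?thesis by (simp add: algebra_simps)
qed

lemma slo_parts:
  assumes "strict_linear_order_on UNIV r"
  shows "trans r" "irrefl r" "\<And>x y. x \<noteq> y \<Longrightarrow> (x, y) \<in> r \<or> (y, x) \<in> r"
  using assms unfolding strict_linear_order_on_def total_on_def by auto

lemma aa_step:
  assumes tr: "trans r" and ir: "irrefl r" and yx: "(y, x) \<in> r"
  shows "aa p r y + pmf p y \<le> aa p r x"
proof -
  have d: "{t. (t, y) \<in> r} \<inter> {y} = {}" using ir by (auto simp: irrefl_def)
  have "aa p r y + pmf p y = measure (measure_pmf p) ({t. (t, y) \<in> r} \<union> {y})"
    unfolding aa_def using d by (subst measure_pmf.finite_measure_Union) (auto simp: measure_pmf_single)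
  also have "\<dots> \<le> aa p r x"
    unfolding aa_def using tr yx by (intro measure_pmf.finite_measure_mono) (auto dest: transD)
  finally show ?thesis .
qed

lemma aa_le1:
  assumes ir: "irrefl r"
  shows "aa p r x + pmf p x \<le> 1" "0 \<le> aa p r x"
proof -
  have d: "{t. (t, x) \<in> r} \<inter> {x} = {}" using ir by (auto simp: irrefl_def)
  have "aa p r x + pmf p x = measure (measure_pmf p) ({t. (t, x) \<in> r} \<union> {x})"
    unfolding aa_def using d by (subst measure_pmf.finite_measure_Union) (auto simp: measure_pmf_single)
  also have "\<dots> \<le> 1" by simp
  finally show "aa p r x + pmf p x \<le> 1" .
  show "0 \<le> aa p r x" unfolding aa_def by simp
qed

lemma Fz_sep:
  fixes r :: "('a::countable \<times> 'a) set"
  assumes slo: "strict_linear_order_on UNIV r" and yx: "y \<noteq> x" and u: "0 < u" "u < 1"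
  shows "Fz p r (y, u) \<le> aa p r x \<or> Fz p r (y, u) \<ge> aa p r x + pmf p x"
proof -
  note sp = slo_parts[OF slo]
  have F: "Fz p r (y, u) = aa p r y + pmf p y * u"
    using Fz_eq[OF sp(2)] u by simp
  have py: "0 \<le> pmf p y" by simp
  from sp(3)[OF yx] show ?thesis
  proof
    assume "(y, x) \<in> r"
    then have "aa p r y + pmf p y \<le> aa p r x" by (rule aa_step[OF sp(1,2)])
    moreover have "pmf p y * u \<le> pmf p y" using u py by (simp add: mult_left_le)
    ultimately show ?thesis using F by simp
  next
    assume "(x, y) \<in> r"
    then have "aa p r x + pmf p x \<le> aa p r y" by (rule aa_step[OF sp(1,2)])
    moreover have "pmf p y * u \<ge> 0" using u py by simp
    ultimately show ?thesis using F by simp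
  qed
qed

lemma Bern_sum_le1:
  assumes "0 \<le> w" "w \<le> 1" "K \<subseteq> {..m}"
  shows "(\<Sum>k\<in>K. Bernstein m k w) \<le> 1"
proof -
  have "(\<Sum>k\<in>K. Bernstein m k w) \<le> (\<Sum>k\<le>m. Bernstein m k w)"
    using assms by (intro sum_mono2) (auto intro: Bernstein_nonneg)
  then show ?thesis by simp
qed

lemma unif_emeasure:
  assumes "K \<subseteq> {0..m}"
  shows "emeasure (measure_pmf (pmf_of_set {0..m})) K = ennreal (real (card K) / (real m + 1))"
proof -
  have "emeasure (measure_pmf (pmf_of_set {0..m})) K = ennreal (measure (measure_pmf (pmf_of_set {0..m})) K)"
    by (rule measure_pmf.emeasure_eq_measure)
  also have "measure (measure_pmf (pmf_of_set {0..m})) K = real (card ({0..m} \<inter> K)) / real (card {0..m})"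
    by (rule measure_pmf_of_set) auto
  also have "{0..m} \<inter> K = K" using assms by auto
  finally show ?thesis by (simp add: add.commute)
qed

lemma rev_key:
  fixes r :: "('a::countable \<times> 'a) set"
  assumes slo: "strict_linear_order_on UNIV r"
    and unif: "distr (rank_space p q m) (count_space UNIV) (rank_stat r m) = measure_pmf (pmf_of_set {0..m})"
    and d: "d > 0" and m: "m \<ge> 1"
  shows "(real m * (pmf p x - 2 * d) - 1) / (real m + 1) \<le> pmf q x + 1 / (4 * real m * d\<^sup>2)"
proof -
  note sp = slo_parts[OF slo]
  define al where "al = aa p r x + d"
  define be where "be = aa p r x + pmf p x - d"
  define K where "K = {k. k \<le> m \<and> real m * al < real k \<and> real k < real m * be}"
  define A :: "('a \<times> real) set" where "A = {x} \<times> UNIV \<union> UNIV \<times> - {0<..<1}"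
  define eps where "eps = 1 / (4 * real m * d\<^sup>2)"
  have eps0: "eps \<ge> 0" unfolding eps_def by simp
  have Km: "K \<subseteq> {0..m}" unfolding K_def by auto
  have KI: "K \<inter> {..m} = K" unfolding K_def by auto
  interpret Q: prob_space "nu q" by (rule prob_nu)
  have A1: "{x} \<times> (UNIV :: real set) \<in> sets (nu q)" unfolding sets_nu by (intro pair_measureI) auto
  have A2: "(UNIV :: 'a set) \<times> - {0<..<(1::real)} \<in> sets (nu q)" unfolding sets_nu by (intro pair_measureI) auto
  have Asets: "A \<in> sets (nu q)" unfolding A_def using A1 A2 by auto
  have mA: "measure (nu q) A \<le> pmf q x"
  proof -
    have "measure (nu q) A \<le> measure (nu q) ({x} \<times> UNIV) + measure (nu q) (UNIV \<times> - {0<..<1})"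
      unfolding A_def using A1 A2 by (intro measure_Un_le) auto
    also have "measure (nu q) ({x} \<times> UNIV) = pmf q x"
      by (subst measure_nu_times) (auto simp: measure_pmf_single)
    also have "measure (nu q) ((UNIV :: 'a set) \<times> - {0<..<1}) = 0"
      by (subst measure_nu_times) (auto simp: measure_uniform_measure)
    finally show ?thesis by simp
  qed
  have bound: "(\<Sum>k\<in>K. ennreal (Bernstein m k (Fz p r z))) \<le> indicator A z + ennreal eps" for z
  proof -
    have w: "0 \<le> Fz p r z" "Fz p r z \<le> 1" by (rule Fz_bounds)+
    have nn: "\<And>k. 0 \<le> Bernstein m k (Fz p r z)" using w by (intro Bernstein_nonneg)
    show ?thesis
    proof (cases "z \<in> A")
      case True
      have "(\<Sum>k\<in>K. Bernstein m k (Fz p r z)) \<le> 1"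
        using Km by (intro Bern_sum_le1 w) auto
      then have "(\<Sum>k\<in>K. ennreal (Bernstein m k (Fz p r z))) \<le> 1"
        using nn by (simp add: ennreal_le_1[symmetric] del: ennreal_le_1)
      also have "\<dots> \<le> indicator A z + ennreal eps" using True by simp
      finally show ?thesis .
    next
      case False
      obtain y u where z: "z = (y, u)" by (cases z)
      have yx: "y \<noteq> x" and u: "0 < u" "u < 1" using False unfolding A_def z by auto
      have sep: "Fz p r z \<le> aa p r x \<or> Fz p r z \<ge> aa p r x + pmf p x"
        unfolding z by (rule Fz_sep[OF slo yx u])
      have far: "\<bar>real k - real m * Fz p r z\<bar> \<ge> real m * d" if k: "k \<in> K" for k
      proof -
        have k1: "real m * al < real k" "real k < real m * be" using k unfolding K_def by auto
        from sep show ?thesis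
        proof
          assume "Fz p r z \<le> aa p r x"
          then have "real m * Fz p r z \<le> real m * aa p r x" by (simp add: mult_left_mono)
          then show ?thesis using k1 unfolding al_def by (simp add: algebra_simps)
        next
          assume "Fz p r z \<ge> aa p r x + pmf p x"
          then have "real m * Fz p r z \<ge> real m * (aa p r x + pmf p x)" by (simp add: mult_left_mono)
          then show ?thesis using k1 unfolding be_def by (simp add: algebra_simps)
        qed
      qed
      have "(\<Sum>k\<in>K. Bernstein m k (Fz p r z)) \<le> eps"
        unfolding eps_def using m d w Km far by (intro Bern_tail) auto
      then have "(\<Sum>k\<in>K. ennreal (Bernstein m k (Fz p r z))) \<le> ennreal eps"
        using nn by (simp add: ennreal_leI)
      then show ?thesis by (simp add: add_increasing)
    qed
  qed
  have "ennreal (real (card K) / (real m + 1)) = emeasure (distr (rank_space p q m) (count_space UNIV) (rank_stat r m)) K"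
    unfolding unif using Km by (rule unif_emeasure[symmetric])
  also have "\<dots> = (\<integral>\<^sup>+z. (\<Sum>k\<in>K. ennreal (Bernstein m k (Fz p r z))) \<partial>nu q)"
    using rank_prob2[OF sp(2)] KI by simp
  also have "\<dots> \<le> (\<integral>\<^sup>+z. (indicator A z + ennreal eps) \<partial>nu q)"
    by (intro nn_integral_mono bound)
  also have "\<dots> = emeasure (nu q) A + ennreal eps"
  proof -
    have sp1: "emeasure (nu q) UNIV = 1" using Q.emeasure_space_1 by simp
    show ?thesis using Asets sp1 by (subst nn_integral_add) auto
  qed
  also have "\<dots> = ennreal (measure (nu q) A + eps)"
    using eps0 by (simp add: Q.emeasure_eq_measure)
  finally have le: "real (card K) / (real m + 1) \<le> measure (nu q) A + eps"
    using eps0 by (subst (asm) ennreal_le_iff) auto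
  have "real m * (pmf p x - 2 * d) - 1 \<le> real (card K)"
  proof -
    have "real m * (be - al) - 1 \<le> real (card K)"
      unfolding K_def using aa_le1[OF sp(2), of p x] d unfolding al_def be_def
      by (intro count_lb) auto
    then show ?thesis unfolding al_def be_def by (simp add: algebra_simps)
  qed
  then have "(real m * (pmf p x - 2 * d) - 1) / (real m + 1) \<le> real (card K) / (real m + 1)"
    by (intro divide_right_mono) auto
  with le mA show ?thesis unfolding eps_def by simp
qed

lemma rev_ge:
  fixes r :: "('a::countable \<times> 'a) set"
  assumes slo: "strict_linear_order_on UNIV r"
    and unif: "\<forall>m::nat. m \<ge> 1 \<longrightarrow> distr (rank_space p q m) (count_space UNIV) (rank_stat r m) = measure_pmf (pmf_of_set {0..m})"
  shows "pmf p x \<le> pmf q x"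
proof (rule field_le_epsilon)
  fix e :: real assume e: "0 < e"
  define d where "d = e / 2"
  have d: "d > 0" using e by (simp add: d_def)
  define c where "c = pmf p x - 2 * d"
  have X: "(\<lambda>m. c - (c + 1) * inverse (real (Suc m))) \<longlonglongrightarrow> c - (c + 1) * 0"
    by (intro tendsto_intros LIMSEQ_inverse_real_of_nat)
  have Y: "(\<lambda>m. pmf q x + 1 / (4 * d\<^sup>2) * inverse (real m)) \<longlonglongrightarrow> pmf q x + 1 / (4 * d\<^sup>2) * 0"
    by (intro tendsto_intros lim_inverse_n)
  have ev: "\<forall>m\<ge>1. c - (c + 1) * inverse (real (Suc m)) \<le> pmf q x + 1 / (4 * d\<^sup>2) * inverse (real m)"
  proof (intro allI impI)
    fix m :: nat assume m: "m \<ge> 1"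
    have "(real m * c - 1) / (real m + 1) \<le> pmf q x + 1 / (4 * real m * d\<^sup>2)"
      unfolding c_def using rev_key[OF slo _ d m] unif m by blast
    moreover have "(real m * c - 1) / (real m + 1) = c - (c + 1) * inverse (real (Suc m))"
      by (simp add: field_simps)
    moreover have "1 / (4 * real m * d\<^sup>2) = 1 / (4 * d\<^sup>2) * inverse (real m)"
      by (simp add: field_simps)
    ultimately show "c - (c + 1) * inverse (real (Suc m)) \<le> pmf q x + 1 / (4 * d\<^sup>2) * inverse (real m)"
      by simp
  qed
  have "c - (c + 1) * 0 \<le> pmf q x + 1 / (4 * d\<^sup>2) * 0"
    by (rule LIMSEQ_le[OF X Y]) (use ev in blast)
  then show "pmf p x \<le> pmf q x + e" unfolding c_def d_def by simp
qed

lemma pmf_le_eq: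
  assumes le: "\<And>x. pmf p x \<le> pmf q x"
  shows "p = q"
proof (rule pmf_eqI)
  fix x
  have mono: "measure (measure_pmf p) A \<le> measure (measure_pmf q) A" for A
  proof -
    have "emeasure (measure_pmf p) A = (\<integral>\<^sup>+y. indicator A y \<partial>measure_pmf p)" by simp
    also have "\<dots> = (\<integral>\<^sup>+y. ennreal (pmf p y) * indicator A y \<partial>count_space UNIV)"
      by (rule nn_integral_measure_pmf)
    also have "\<dots> \<le> (\<integral>\<^sup>+y. ennreal (pmf q y) * indicator A y \<partial>count_space UNIV)"
      using le by (intro nn_integral_mono mult_right_mono) auto
    also have "\<dots> = (\<integral>\<^sup>+y. indicator A y \<partial>measure_pmf q)"
      by (rule nn_integral_measure_pmf[symmetric])
    also have "\<dots> = emeasure (measure_pmf q) A" by simp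
    finally show ?thesis
      by (simp add: measure_pmf.emeasure_eq_measure)
  qed
  have "measure (measure_pmf p) (UNIV - {x}) = 1 - pmf p x"
    using measure_pmf.prob_compl[of "{x}" p] by (simp add: measure_pmf_single)
  moreover have "measure (measure_pmf q) (UNIV - {x}) = 1 - pmf q x"
    using measure_pmf.prob_compl[of "{x}" q] by (simp add: measure_pmf_single)
  ultimately have "pmf q x \<le> pmf p x" using mono[of "UNIV - {x}"] by simp
  then show "pmf p x = pmf q x" using le[of x] by simp
qed



definition JJ :: "'a pmf \<Rightarrow> ('a \<times> 'a) set \<Rightarrow> 'a \<Rightarrow> real set" where
  "JJ p r x = {aa p r x <..< aa p r x + pmf p x}"

lemma JJ_disj:
  assumes slo: "strict_linear_order_on UNIV r" and xy: "x \<noteq> y"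
  shows "JJ p r x \<inter> JJ p r y = {}"
proof -
  note sp = slo_parts[OF slo]
  from sp(3)[OF xy] show ?thesis
  proof
    assume "(x, y) \<in> r"
    then have "aa p r x + pmf p x \<le> aa p r y" by (rule aa_step[OF sp(1,2)])
    then show ?thesis unfolding JJ_def by auto
  next
    assume "(y, x) \<in> r"
    then have "aa p r y + pmf p y \<le> aa p r x" by (rule aa_step[OF sp(1,2)])
    then show ?thesis unfolding JJ_def by auto
  qed
qed

lemma JJ_sub:
  assumes "irrefl r"
  shows "JJ p r x \<subseteq> {0<..<1}"
  using aa_le1[OF assms, of p x] unfolding JJ_def by auto

lemma count_indicator_JJ:
  assumes slo: "strict_linear_order_on UNIV r"
  shows "(\<integral>\<^sup>+x. indicator (JJ p r x) w \<partial>count_space UNIV) = indicator (\<Union>x. JJ p r x) w"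
proof (cases "w \<in> (\<Union>x. JJ p r x)")
  case True
  then obtain x0 where x0: "w \<in> JJ p r x0" by auto
  have "{x. w \<in> JJ p r x} = {x0}"
    using x0 JJ_disj[OF slo] by blast
  then have "(\<lambda>x. indicator (JJ p r x) w :: ennreal) = indicator {x0}"
    by (auto simp: indicator_def fun_eq_iff)
  then show ?thesis using True by simp
next
  case False
  then have "(\<lambda>x. indicator (JJ p r x) w :: ennreal) = (\<lambda>_. 0)"
    by (auto simp: indicator_def fun_eq_iff)
  then show ?thesis using False by simp
qed

lemma UJJ_measure:
  fixes r :: "('a::countable \<times> 'a) set"
  assumes slo: "strict_linear_order_on UNIV r"
  shows "emeasure lborel (\<Union>x. JJ p r x) = 1"
proof -
  have "emeasure lborel (\<Union>(range (JJ p r))) = (\<integral>\<^sup>+x. emeasure lborel (JJ p r x) \<partial>count_space UNIV)"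
    using JJ_disj[OF slo] by (intro emeasure_UN_countable) (auto simp: JJ_def disjoint_family_on_def)
  also have "\<dots> = (\<integral>\<^sup>+x. ennreal (pmf p x) * 1 \<partial>count_space UNIV)"
    by (simp add: JJ_def)
  also have "\<dots> = (\<integral>\<^sup>+x. 1 \<partial>measure_pmf p)"
    by (rule nn_integral_measure_pmf[symmetric])
  also have "\<dots> = 1" by simp
  finally show ?thesis by simp
qed

lemma UJJ_AE:
  fixes r :: "('a::countable \<times> 'a) set"
  assumes slo: "strict_linear_order_on UNIV r"
  shows "AE w in lborel. indicator (\<Union>x. JJ p r x) w = (indicator {0<..<1} w :: ennreal)"
proof -
  note sp = slo_parts[OF slo]
  let ?U = "\<Union>x. JJ p r x"
  have Usets: "?U \<in> sets lborel"
    by (rule sets.countable_UN) (auto simp: JJ_def)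
  have sub: "?U \<subseteq> {0<..<1}" using JJ_sub[OF sp(2)] by blast
  have "emeasure lborel ({0<..<1} - ?U) = emeasure lborel {0<..<(1::real)} - emeasure lborel ?U"
    using Usets sub UJJ_measure[OF slo, of p] by (intro emeasure_Diff) auto
  also have "\<dots> = 0" using UJJ_measure[OF slo] by simp
  finally have null: "{0<..<1} - ?U \<in> null_sets lborel"
    using Usets by (auto simp: null_sets_def)
  show ?thesis
  proof (rule AE_I'[OF null])
    show "{w \<in> space lborel. \<not> indicator ?U w = (indicator {0<..<1} w :: ennreal)} \<subseteq> {0<..<1} - ?U"
      using sub by (auto simp: indicator_def)
  qed
qed

lemma Fz_meas:
  fixes r :: "('a::countable \<times> 'a) set"
  assumes ir: "irrefl r" and g[measurable]: "g \<in> borel_measurable (borel :: real measure)"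
  shows "(\<lambda>z. ennreal (g (Fz p r z))) \<in> borel_measurable (nu p)"
proof -
  have "(\<lambda>z. ennreal (g (Fz p r z))) = (\<lambda>z. ennreal (g (aa p r (fst z) + pmf p (fst z) * max 0 (min 1 (snd z)))))"
    using Fz_eq[OF ir] by (intro ext) (metis prod.collapse)
  moreover have "(\<lambda>z. ennreal (g (aa p r (fst z) + pmf p (fst z) * max 0 (min 1 (snd z))))) \<in> borel_measurable (count_space UNIV \<Otimes>\<^sub>M borel)"
    by (rule measurable_pair_measure_countable1) auto
  ultimately show ?thesis by (simp add: measurable_cong_sets[OF sets_nu refl])
qed

lemma affine_piece:
  assumes g[measurable]: "g \<in> borel_measurable (borel :: real measure)" and c: "c \<ge> 0"
  shows "ennreal c * (\<integral>\<^sup>+u. ennreal (g (a + c * u)) * indicator {0<..<1} u \<partial>lborel) =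
    (\<integral>\<^sup>+w. ennreal (g w) * indicator {a<..<a + c} w \<partial>lborel)"
proof (cases "c = 0")
  case True
  then show ?thesis by simp
next
  case False
  then have c0: "c > 0" using c by simp
  have fm: "(\<lambda>w. ennreal (g w) * indicator {a<..<a + c} w) \<in> borel_measurable borel"
    by measurable
  have "(\<integral>\<^sup>+w. ennreal (g w) * indicator {a<..<a + c} w \<partial>lborel) =
      ennreal \<bar>c\<bar> * (\<integral>\<^sup>+u. ennreal (g (a + c * u)) * indicator {a<..<a + c} (a + c * u) \<partial>lborel)"
    by (rule nn_integral_real_affine[OF fm False])
  also have "(\<lambda>u. ennreal (g (a + c * u)) * indicator {a<..<a + c} (a + c * u)) =
      (\<lambda>u. ennreal (g (a + c * u)) * indicator {0<..<1} u)"
  proof (intro ext)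
    fix u
    have i1: "(a < a + c * u) = (0 < u)" using c0 by (simp add: zero_less_mult_iff)
    have i2: "(a + c * u < a + c) = (u < 1)"
      using c0 mult_less_cancel_left_pos[OF c0, of u 1] by simp
    have "(a + c * u \<in> {a<..<a + c}) = (u \<in> {0<..<1})"
      using i1 i2 by simp
    then show "ennreal (g (a + c * u)) * indicator {a<..<a + c} (a + c * u) = ennreal (g (a + c * u)) * indicator {0<..<1} u"
      unfolding indicator_def by simp
  qed
  finally show ?thesis using c0 by (simp only: abs_of_pos)
qed

lemma tiling:
  fixes r :: "('a::countable \<times> 'a) set"
  assumes slo: "strict_linear_order_on UNIV r" and g[measurable]: "g \<in> borel_measurable (borel :: real measure)"
  shows "(\<integral>\<^sup>+z. ennreal (g (Fz p r z)) \<partial>nu p) = (\<integral>\<^sup>+w. ennreal (g w) * indicator {0<..<1} w \<partial>lborel)"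
proof -
  note sp = slo_parts[OF slo]
  interpret U: prob_space UU by (rule prob_UU)
  have fm: "(\<lambda>z. ennreal (g (Fz p r z))) \<in> borel_measurable (measure_pmf p \<Otimes>\<^sub>M UU)"
    using Fz_meas[OF sp(2) g] unfolding nu_def .
  have "(\<integral>\<^sup>+z. ennreal (g (Fz p r z)) \<partial>nu p) = (\<integral>\<^sup>+x. \<integral>\<^sup>+u. ennreal (g (Fz p r (x, u))) \<partial>UU \<partial>measure_pmf p)"
    unfolding nu_def using U.nn_integral_fst[OF fm] by simp
  also have "\<dots> = (\<integral>\<^sup>+x. \<integral>\<^sup>+u. ennreal (g (aa p r x + pmf p x * u)) * indicator {0<..<1} u \<partial>lborel \<partial>measure_pmf p)"
  proof (intro nn_integral_cong)
    fix x
    have m1: "(\<lambda>u. ennreal (g (Fz p r (x, u)))) \<in> borel_measurable lborel"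
    proof -
      have "(\<lambda>u. ennreal (g (Fz p r (x, u)))) = (\<lambda>u. ennreal (g (aa p r x + pmf p x * max 0 (min 1 u))))"
        using Fz_eq[OF sp(2)] by auto
      then show ?thesis by simp
    qed
    have "(\<integral>\<^sup>+u. ennreal (g (Fz p r (x, u))) \<partial>UU) = (\<integral>\<^sup>+u. ennreal (g (Fz p r (x, u))) * indicator {0<..<1} u \<partial>lborel) / emeasure lborel {0<..<(1::real)}"
      using m1 by (intro nn_integral_uniform_measure) auto
    also have "\<dots> = (\<integral>\<^sup>+u. ennreal (g (Fz p r (x, u))) * indicator {0<..<1} u \<partial>lborel)" by (simp add: divide_ennreal_def)
    also have "\<dots> = (\<integral>\<^sup>+u. ennreal (g (aa p r x + pmf p x * u)) * indicator {0<..<1} u \<partial>lborel)"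
      by (intro nn_integral_cong) (auto simp: Fz_eq[OF sp(2)] indicator_def)
    finally show "(\<integral>\<^sup>+u. ennreal (g (Fz p r (x, u))) \<partial>UU) = (\<integral>\<^sup>+u. ennreal (g (aa p r x + pmf p x * u)) * indicator {0<..<1} u \<partial>lborel)" .
  qed
  also have "\<dots> = (\<integral>\<^sup>+x. ennreal (pmf p x) * (\<integral>\<^sup>+u. ennreal (g (aa p r x + pmf p x * u)) * indicator {0<..<1} u \<partial>lborel) \<partial>count_space UNIV)"
    by (rule nn_integral_measure_pmf)
  also have "\<dots> = (\<integral>\<^sup>+x. (\<integral>\<^sup>+w. ennreal (g w) * indicator (JJ p r x) w \<partial>lborel) \<partial>count_space UNIV)"
    unfolding JJ_def by (intro nn_integral_cong affine_piece g) simp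
  also have "\<dots> = (\<integral>\<^sup>+w. (\<integral>\<^sup>+x. ennreal (g w) * indicator (JJ p r x) w \<partial>count_space UNIV) \<partial>lborel)"
    by (rule nn_integral_count_space_nn_integral[symmetric]) (auto simp: JJ_def)
  also have "\<dots> = (\<integral>\<^sup>+w. ennreal (g w) * indicator (\<Union>x. JJ p r x) w \<partial>lborel)"
    by (intro nn_integral_cong) (simp add: nn_integral_cmult count_indicator_JJ[OF slo])
  also have "\<dots> = (\<integral>\<^sup>+w. ennreal (g w) * indicator {0<..<1} w \<partial>lborel)"
    by (intro nn_integral_cong_AE) (use UJJ_AE[OF slo, of p] in \<open>auto elim!: AE_mp\<close>)
  finally show ?thesis .
qed

lemma Bern_meas: "Bernstein m k \<in> borel_measurable (borel :: real measure)"
proof -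
  have "(\<lambda>x. Bernstein m k x) \<in> borel_measurable (borel :: real measure)"
    unfolding Bernstein_def by measurable
  then show ?thesis by simp
qed

lemma fwd_k:
  fixes r :: "('a::countable \<times> 'a) set"
  assumes slo: "strict_linear_order_on UNIV r" and km: "k \<le> m"
  shows "(\<integral>\<^sup>+z. ennreal (Bernstein m k (Fz p r z)) \<partial>nu p) = ennreal (1 / (real m + 1))"
proof -
  have "(\<integral>\<^sup>+z. ennreal (Bernstein m k (Fz p r z)) \<partial>nu p) = (\<integral>\<^sup>+w. ennreal (Bernstein m k w) * indicator {0<..<1} w \<partial>lborel)"
    by (rule tiling[OF slo Bern_meas])
  also have "\<dots> = (\<integral>\<^sup>+w. ennreal (indicator {0<..<1} w * Bernstein m k w) \<partial>lborel)"
    by (intro nn_integral_cong) (auto simp: indicator_def)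
  also have "\<dots> = ennreal (1 / (real m + 1))"
    by (rule nn_integral_has_integral_lebesgue[OF _ Bern_integral[OF km]]) (auto intro: Bernstein_nonneg)
  finally show ?thesis .
qed

lemma fwd:
  fixes r :: "('a::countable \<times> 'a) set"
  assumes slo: "strict_linear_order_on UNIV r"
  shows "distr (rank_space p p m) (count_space UNIV) (rank_stat r m) = measure_pmf (pmf_of_set {0..m})"
proof (rule measure_eqI)
  note sp = slo_parts[OF slo]
  show "sets (distr (rank_space p p m) (count_space UNIV) (rank_stat r m)) = sets (measure_pmf (pmf_of_set {0..m}))"
    by simp
  fix A assume "A \<in> sets (distr (rank_space p p m) (count_space UNIV) (rank_stat r m))"
  have "emeasure (distr (rank_space p p m) (count_space UNIV) (rank_stat r m)) A =
      (\<integral>\<^sup>+z. (\<Sum>k\<in>A \<inter> {..m}. ennreal (Bernstein m k (Fz p r z))) \<partial>nu p)"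
    by (rule rank_prob2[OF sp(2)])
  also have "\<dots> = (\<Sum>k\<in>A \<inter> {..m}. (\<integral>\<^sup>+z. ennreal (Bernstein m k (Fz p r z)) \<partial>nu p))"
    by (intro nn_integral_sum Fz_meas[OF sp(2) Bern_meas])
  also have "\<dots> = (\<Sum>k\<in>A \<inter> {..m}. ennreal (1 / (real m + 1)))"
    by (intro sum.cong refl fwd_k[OF slo]) auto
  also have "\<dots> = ennreal (real (card (A \<inter> {..m})) / (real m + 1))"
    by (simp add: ennreal_of_nat_eq_real_of_nat ennreal_mult'[symmetric])
  also have "\<dots> = emeasure (measure_pmf (pmf_of_set {0..m})) A"
  proof -
    have "measure (measure_pmf (pmf_of_set {0..m})) A = real (card ({0..m} \<inter> A)) / real (card {0..m})"
      by (rule measure_pmf_of_set) auto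
    moreover have "{0..m} \<inter> A = A \<inter> {..m}" by auto
    ultimately show ?thesis
      by (simp add: measure_pmf.emeasure_eq_measure add.commute)
  qed
  finally show "emeasure (distr (rank_space p p m) (count_space UNIV) (rank_stat r m)) A = emeasure (measure_pmf (pmf_of_set {0..m})) A" .
qed

theorem theorem3p1:
  fixes r :: "('a::countable \<times> 'a) set" and p q :: "'a pmf"
  assumes "strict_linear_order_on UNIV r"
  shows "p = q \<longleftrightarrow>
    (\<forall>m::nat. m \<ge> 1 \<longrightarrow>
       distr (rank_space p q m) (count_space UNIV) (rank_stat r m)
         = measure_pmf (pmf_of_set {0..m}))"
proof
  assume "p = q"
  then show "\<forall>m::nat. m \<ge> 1 \<longrightarrow> distr (rank_space p q m) (count_space UNIV) (rank_stat r m) = measure_pmf (pmf_of_set {0..m})"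
    using fwd[OF assms] by simp
next
  assume H: "\<forall>m::nat. m \<ge> 1 \<longrightarrow> distr (rank_space p q m) (count_space UNIV) (rank_stat r m) = measure_pmf (pmf_of_set {0..m})"
  show "p = q"
    by (rule pmf_le_eq) (rule rev_ge[OF assms H])
qed

end
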